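(* Let $q\ge 2^{40}$ be a prime power, $n=q^2(q^2-q+1)$ and $m=2^{24}q^2$. For every $X\subseteq V(H_q)$ with $|X|=m$, letting $Z_X$ be the number of edges of $H_q^*$ with both endpoints in $X$, \[ \mathbb P\bigl(Z_X\le 2^{40}q^3\bigr)<n^{-m}. \]
   Context: $\mathcal H$ is the Hermitian unital $\{\langle x,y,z\rangle : x^{q+1}+y^{q+1}+z^{q+1}=0\}$ in the projective plane $\mathrm{PG}(2,q^2)$ (it has $q^3+1$ points and every line meets it in $1$ or $q+1$ points; lines meeting it in $q+1$ points are secants). $H_q$ is the graph on the set of secants, two distinct secants adjacent iff they meet in a point of $\mathcal H$; it has $n=q^2(q^2-q+1)$ vertices. For $P\in\mathcal H$, $C_P$ is the set of secants through $P$ and $\mathcal C=\{C_P:P\in\mathcal H\}$. The random graph $H_q^*$ on vertex set $V(H_q)$ is defined as follows: for each $C\in\mathcal C$, independently over cliques and vertices, each vertex of $C$ is placed in $A_C$ or $B_C$ with probability $1/2$ each; $H_q^*$ is the union over $C\in\mathcal C$ of the complete bipartite graphs with parts $A_C$ and $B_C$. Logarithms are natural. *)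

theory Defs
  imports "HOL-Probability.Probability"
begin

type_synonym 'a vec3 = "'a \<times> 'a \<times> 'a"

definition smult3 :: "'a::field \<Rightarrow> 'a vec3 \<Rightarrow> 'a vec3" where
  "smult3 c v = (case v of (x, y, z) \<Rightarrow> (c * x, c * y, c * z))"

definition dot3 :: "'a::field vec3 \<Rightarrow> 'a vec3 \<Rightarrow> 'a" where
  "dot3 u v = (case u of (a, b, c) \<Rightarrow> case v of (x, y, z) \<Rightarrow> a * x + b * y + c * z)"

definition proj_point :: "'a::field vec3 \<Rightarrow> 'a vec3 set" where
  "proj_point v = {smult3 c v | c. c \<noteq> 0}"

definition PG_points :: "'a::field vec3 set set" where
  "PG_points = {proj_point v | v. v \<noteq> 0}"

definition proj_line :: "'a::field vec3 \<Rightarrow> 'a vec3 set set" where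
  "proj_line u = {proj_point v | v. v \<noteq> 0 \<and> dot3 u v = 0}"

definition PG_lines :: "'a::field vec3 set set set" where
  "PG_lines = {proj_line u | u. u \<noteq> 0}"

definition hermitian_unital :: "nat \<Rightarrow> 'a::field vec3 set set" where
  "hermitian_unital q =
     {proj_point (x, y, z) | x y z. (x, y, z) \<noteq> 0 \<and> x ^ (q + 1) + y ^ (q + 1) + z ^ (q + 1) = 0}"

text \<open>Secants: lines meeting the unital in q+1 points. These are the vertices of H_q.\<close>
definition secants :: "nat \<Rightarrow> 'a::field vec3 set set set" where
  "secants q = {L \<in> PG_lines. card (L \<inter> hermitian_unital q) = q + 1}"

text \<open>Incident pairs (P, l) with P a point of the unital and l a secant through P,
  i.e. the pairs (clique C_P, vertex of C_P).\<close>
definition incid :: "nat \<Rightarrow> ('a::field vec3 set \<times> 'a vec3 set set) set" where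
  "incid q = {(P, l). P \<in> hermitian_unital q \<and> l \<in> secants q \<and> P \<in> l}"

text \<open>The sample space: a fair independent coin for each incident pair;
  sigma (P,l) = True means l \<in> A_{C_P}, False means l \<in> B_{C_P}.\<close>
definition coin_space :: "nat \<Rightarrow> (('a::{field,finite} vec3 set \<times> 'a vec3 set set) \<Rightarrow> bool) pmf" where
  "coin_space q = pmf_of_set (PiE (incid q) (\<lambda>_. UNIV))"

text \<open>Adjacency in H_q^*: union over P of the complete bipartite graphs between A_{C_P} and B_{C_P}.\<close>
definition Hstar_adj :: "nat \<Rightarrow> ('a::field vec3 set \<times> 'a vec3 set set \<Rightarrow> bool)
    \<Rightarrow> 'a vec3 set set \<Rightarrow> 'a vec3 set set \<Rightarrow> bool" where
  "Hstar_adj q \<sigma> l l' \<longleftrightarrow>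
     (\<exists>P \<in> hermitian_unital q. (P, l) \<in> incid q \<and> (P, l') \<in> incid q \<and> \<sigma> (P, l) \<noteq> \<sigma> (P, l'))"

definition Z_edges :: "nat \<Rightarrow> 'a::field vec3 set set set
    \<Rightarrow> ('a vec3 set \<times> 'a vec3 set set \<Rightarrow> bool) \<Rightarrow> nat" where
  "Z_edges q X \<sigma> = card {{l, l'} | l l'. l \<in> X \<and> l' \<in> X \<and> l \<noteq> l' \<and> Hstar_adj q \<sigma> l l'}"

end

theory Submission
  imports Defs "HOL-Computational_Algebra.Polynomial"
begin

lemma smult3_simp[simp]: "smult3 c (x, y, z) = (c*x, c*y, c*z)"
  by (simp add: smult3_def)
lemma dot3_simp[simp]: "dot3 (a,b,c) (x, y, z) = a*x+b*y+c*z"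
  by (simp add: dot3_def)

lemma smult3_assoc: "smult3 c (smult3 d v) = smult3 (c*d) (v::'a::field vec3)"
  by (cases v) (auto simp: mult.assoc)

lemma smult3_one[simp]: "smult3 1 (v::'a::field vec3) = v"
  by (cases v) auto

lemma smult3_eq0: "(c::'a::field) \<noteq> 0 \<Longrightarrow> smult3 c v = 0 \<longleftrightarrow> v = 0"
  by (cases v) (auto simp: zero_prod_def)

lemma in_proj_point_self: "v \<in> proj_point (v::'a::field vec3)"
  unfolding proj_point_def by (rule CollectI, rule exI[of _ 1]) auto

lemma proj_point_smult: "(c::'a::field) \<noteq> 0 \<Longrightarrow> proj_point (smult3 c v) = proj_point v"
proof (intro set_eqI iffI)
  fix x assume c: "c \<noteq> 0" and "x \<in> proj_point (smult3 c v)"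
  then obtain d where d: "d \<noteq> 0" "x = smult3 d (smult3 c v)" unfolding proj_point_def by auto
  show "x \<in> proj_point v" unfolding proj_point_def
    by (rule CollectI, rule exI[of _ "d*c"]) (use c d in \<open>auto simp: smult3_assoc\<close>)
next
  fix x assume c: "c \<noteq> 0" and "x \<in> proj_point v"
  then obtain d where d: "d \<noteq> 0" "x = smult3 d v" unfolding proj_point_def by auto
  show "x \<in> proj_point (smult3 c v)" unfolding proj_point_def
    by (rule CollectI, rule exI[of _ "d/c"]) (use c d in \<open>auto simp: smult3_assoc\<close>)
qed

lemma proj_point_eqD: "proj_point v = proj_point (w::'a::field vec3) \<Longrightarrow> \<exists>c. c \<noteq> 0 \<and> w = smult3 c v"
proof -
  assume "proj_point v = proj_point w"
  then have "w \<in> proj_point v" using in_proj_point_self[of w] by simp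
  then show ?thesis unfolding proj_point_def by auto
qed

lemma dot3_smult_right: "dot3 u (smult3 c v) = c * dot3 u (v::'a::field vec3)"
  by (cases u; cases v) (auto simp: algebra_simps)
lemma dot3_smult_left: "dot3 (smult3 c u) v = c * dot3 u (v::'a::field vec3)"
  by (cases u; cases v) (auto simp: algebra_simps)

lemma proj_line_smult: "(c::'a::field) \<noteq> 0 \<Longrightarrow> proj_line (smult3 c u) = proj_line u"
  unfolding proj_line_def by (auto simp: dot3_smult_left)

lemma in_proj_line_rep:
  assumes "proj_point w \<in> proj_line (u::'a::field vec3)"
  shows "dot3 u w = 0"
proof -
  from assms obtain v where v: "v \<noteq> 0" "dot3 u v = 0" "proj_point w = proj_point v"
    unfolding proj_line_def by auto
  from proj_point_eqD[OF v(3)] obtain c where c: "c \<noteq> 0" "v = smult3 c w"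
    by auto
  then have "c * dot3 u w = 0" using v(2) by (simp add: dot3_smult_right)
  then show ?thesis using c by simp
qed

lemma cross_zero_prop:
  fixes ax ay az bx bw bz :: "'a::field"
  assumes "(ax, ay, az) \<noteq> 0" "ay*bz - az*bw = 0" "az*bx - ax*bz = 0" "ax*bw - ay*bx = 0"
  shows "\<exists>k. (bx, bw, bz) = smult3 k (ax, ay, az)"
proof (cases "ax = 0")
  case False
  then show ?thesis using assms by (intro exI[of _ "bx/ax"]) (auto simp: field_simps)
next
  case a1: True
  show ?thesis
  proof (cases "ay = 0")
    case False
    then show ?thesis using assms by (intro exI[of _ "bw/ay"]) (auto simp: field_simps)
  next
    case True
    with a1 assms have "az \<noteq> 0" by (auto simp: zero_prod_def)
    then show ?thesis using assms by (intro exI[of _ "bz/az"]) (auto simp: field_simps)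
  qed
qed

lemma two_points_line:
  fixes u u' v w :: "'a::field vec3"
  assumes "u \<noteq> 0" "v \<noteq> 0" "w \<noteq> 0"
    and "dot3 u v = 0" "dot3 u w = 0" "dot3 u' v = 0" "dot3 u' w = 0"
    and "proj_point v \<noteq> proj_point w"
  shows "\<exists>k. u' = smult3 k u"
proof -
  obtain v1 v2 v3 where vv: "v = (v1, v2, v3)" by (cases v) auto
  obtain w1 w2 w3 where ww: "w = (w1, w2, w3)" by (cases w) auto
  obtain u1 u2 u3 where uu: "u = (u1, u2, u3)" by (cases u) auto
  obtain x1 x2 x3 where xx: "u' = (x1, x2, x3)" by (cases u') auto
  define c1 where "c1 = v2*w3 - v3*w2"
  define c2 where "c2 = v3*w1 - v1*w3"
  define c3 where "c3 = v1*w2 - v2*w1"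
  have cne: "(c1, c2, c3) \<noteq> 0"
  proof (rule notI)
    assume "(c1, c2, c3) = 0"
    then have "c1 = 0" "c2 = 0" "c3 = 0" by (auto simp: zero_prod_def)
    then obtain k where k: "w = smult3 k v"
      using cross_zero_prop[where ax=v1 and ay=v2 and az=v3 and bx=w1 and bw=w2 and bz=w3] assms(2) vv ww
      unfolding c1_def c2_def c3_def by auto
    have "k \<noteq> 0" using k assms(3) by (cases v) (auto simp: zero_prod_def)
    then have "proj_point w = proj_point v" using k proj_point_smult[of k v] by simp
    with assms(8) show False by simp
  qed
  have du: "u1 * v1 + u2 * v2 + u3 * v3 = 0" "u1 * w1 + u2 * w2 + u3 * w3 = 0"
    using assms(4,5) uu vv ww by auto
  have dx: "x1 * v1 + x2 * v2 + x3 * v3 = 0" "x1 * w1 + x2 * w2 + x3 * w3 = 0"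
    using assms(6,7) xx vv ww by auto
  have par: "\<exists>k. (y1, y2, y3) = smult3 k (c1, c2, c3)"
    if d: "y1 * v1 + y2 * v2 + y3 * v3 = 0" "y1 * w1 + y2 * w2 + y3 * w3 = 0" for y1 y2 y3
  proof (rule cross_zero_prop[OF cne])
    have "c2 * y3 - c3 * y2 = w1 * (y1 * v1 + y2 * v2 + y3 * v3) - v1 * (y1 * w1 + y2 * w2 + y3 * w3)"
      unfolding c1_def c2_def c3_def by (simp add: algebra_simps)
    then show "c2 * y3 - c3 * y2 = 0" using d by simp
    have "c3 * y1 - c1 * y3 = w2 * (y1 * v1 + y2 * v2 + y3 * v3) - v2 * (y1 * w1 + y2 * w2 + y3 * w3)"
      unfolding c1_def c2_def c3_def by (simp add: algebra_simps)
    then show "c3 * y1 - c1 * y3 = 0" using d by simp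
    have "c1 * y2 - c2 * y1 = w3 * (y1 * v1 + y2 * v2 + y3 * v3) - v3 * (y1 * w1 + y2 * w2 + y3 * w3)"
      unfolding c1_def c2_def c3_def by (simp add: algebra_simps)
    then show "c1 * y2 - c2 * y1 = 0" using d by simp
  qed
  obtain k1 where k1: "u = smult3 k1 (c1, c2, c3)" using par[OF du] uu by auto
  obtain k2 where k2: "u' = smult3 k2 (c1, c2, c3)" using par[OF dx] xx by auto
  have "k1 \<noteq> 0" using k1 assms(1) by (auto simp: zero_prod_def)
  then have "u' = smult3 (k2 / k1) u" using k1 k2 by (simp add: smult3_assoc)
  then show ?thesis by blast
qed

lemma lines_meet_once:
  fixes l l' :: "'a::field vec3 set set"
  assumes "l \<in> PG_lines" "l' \<in> PG_lines" "P \<in> l" "P \<in> l'" "P' \<in> l" "P' \<in> l'" "l \<noteq> l'"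
  shows "P = P'"
proof (rule ccontr)
  assume ne: "P \<noteq> P'"
  obtain u where u: "u \<noteq> 0" "l = proj_line u" using assms(1) unfolding PG_lines_def by auto
  obtain u' where u': "u' \<noteq> 0" "l' = proj_line u'" using assms(2) unfolding PG_lines_def by auto
  obtain v where v: "v \<noteq> 0" "dot3 u v = 0" "P = proj_point v"
    using assms(3) u unfolding proj_line_def by auto
  obtain w where w: "w \<noteq> 0" "dot3 u w = 0" "P' = proj_point w"
    using assms(5) u unfolding proj_line_def by auto
  have "dot3 u' v = 0" using in_proj_line_rep[of v u'] assms(4) u' v by simp
  moreover have "dot3 u' w = 0" using in_proj_line_rep[of w u'] assms(6) u' w by simp
  ultimately obtain k where k: "u' = smult3 k u"
    using two_points_line[of u v w u'] u v w ne by auto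
  have "k \<noteq> 0" using k u' by (cases u) (auto simp: zero_prod_def)
  then have "l' = l" using k u u' proj_line_smult[of k u] by simp
  with assms(7) show False by simp
qed

lemma roots_card: "card {z::'a::field. z ^ Suc n = c} \<le> Suc n"
proof -
  define p :: "'a poly" where "p = monom 1 (Suc n) + [:-c:]"
  have deg: "degree p = Suc n" unfolding p_def
    by (subst degree_add_eq_left) (auto simp: degree_monom_eq)
  then have "p \<noteq> 0" by auto
  have "{z. z ^ Suc n = c} = {z. poly p z = 0}" unfolding p_def by (auto simp: poly_monom)
  then show ?thesis using card_poly_roots_bound[OF \<open>p \<noteq> 0\<close>] deg by simp
qed

definition herm_vecs :: "nat \<Rightarrow> 'a::field vec3 set" where
  "herm_vecs q = {v. v \<noteq> 0 \<and> (case v of (x, y, z) \<Rightarrow> x ^ (q + 1) + y ^ (q + 1) + z ^ (q + 1) = 0)}"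

lemma unital_eq: "hermitian_unital q = proj_point ` herm_vecs q"
  unfolding hermitian_unital_def herm_vecs_def by auto

lemma herm_vecs_smult:
  assumes "v \<in> herm_vecs q" "(c::'a::field) \<noteq> 0"
  shows "smult3 c v \<in> herm_vecs q"
proof -
  obtain x y z where v: "v = (x, y, z)" by (cases v) auto
  have "(c*x) ^ (q + 1) + (c*y) ^ (q + 1) + (c*z) ^ (q + 1) = c ^ (q+1) * (x ^ (q + 1) + y ^ (q + 1) + z ^ (q + 1))"
    by (simp add: power_mult_distrib algebra_simps)
  then show ?thesis using assms v unfolding herm_vecs_def by (auto simp: zero_prod_def)
qed

lemma mem_proj_point_eq:
  assumes "x \<in> proj_point (v::'a::field vec3)"
  shows "proj_point x = proj_point v"
proof -
  from assms obtain c where "c \<noteq> 0" "x = smult3 c v" unfolding proj_point_def by auto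
  then show ?thesis using proj_point_smult by simp
qed

lemma card_proj_point:
  assumes "(v::'a::{field,finite} vec3) \<noteq> 0"
  shows "card (proj_point v) = CARD('a) - 1"
proof -
  have "proj_point v = (\<lambda>c. smult3 c v) ` (UNIV - {0})"
    unfolding proj_point_def by auto
  moreover have "inj_on (\<lambda>c. smult3 c v) (UNIV - {0})"
  proof (rule inj_onI)
    fix c d assume "smult3 c v = smult3 d (v::'a vec3)"
    then show "c = d" using assms by (cases v) (auto simp: zero_prod_def)
  qed
  ultimately show ?thesis by (simp add: card_image card_Diff_subset)
qed

lemma card_herm_vecs: "card (herm_vecs q :: 'a::{field,finite} vec3 set) \<le> CARD('a) ^ 2 * (q + 1)"
proof -
  let ?S = "SIGMA xy:(UNIV::('a\<times>'a) set). {z::'a. z ^ Suc q = - (fst xy ^ (q+1) + snd xy ^ (q+1))}"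
  have "herm_vecs q \<subseteq> (\<lambda>((x,y),z). (x,y,z)) ` ?S"
    unfolding herm_vecs_def
  proof safe
    fix x y z :: 'a assume "(x, y, z) \<noteq> 0" "x ^ (q + 1) + y ^ (q + 1) + z ^ (q + 1) = 0"
    then show "(x, y, z) \<in> (\<lambda>((x,y),z). (x,y,z)) ` ?S"
      by (intro image_eqI[of _ _ "((x,y),z)"]) (auto simp: add_eq_0_iff2 add.commute)
  qed
  then have "card (herm_vecs q :: 'a vec3 set) \<le> card ((\<lambda>((x,y),z). (x,y,z)) ` ?S)"
    by (intro card_mono) auto
  also have "\<dots> \<le> card ?S" by (rule card_image_le) auto
  also have "\<dots> = (\<Sum>xy\<in>(UNIV::('a\<times>'a) set). card {z::'a. z ^ Suc q = - (fst xy ^ (q+1) + snd xy ^ (q+1))})"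
    by (rule card_SigmaI) auto
  also have "\<dots> \<le> (\<Sum>xy\<in>(UNIV::('a\<times>'a) set). Suc q)"
    by (intro sum_mono roots_card)
  also have "\<dots> = CARD('a) ^ 2 * (q + 1)" by (simp add: power2_eq_square)
  finally show ?thesis .
qed

lemma card_unital_aux:
  "card (hermitian_unital q :: 'a::{field,finite} vec3 set set) * (CARD('a) - 1) \<le> CARD('a) ^ 2 * (q + 1)"
proof -
  let ?U = "hermitian_unital q :: 'a vec3 set set"
  have fin: "finite ?U" by simp
  have disj: "\<forall>P\<in>?U. \<forall>P'\<in>?U. P \<noteq> P' \<longrightarrow> P \<inter> P' = {}"
  proof (intro ballI impI)
    fix P P' assume "P \<in> ?U" "P' \<in> ?U" "P \<noteq> P'"
    obtain v where "P = proj_point v" using \<open>P \<in> ?U\<close> unfolding unital_eq by blast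
    obtain v' where "P' = proj_point v'" using \<open>P' \<in> ?U\<close> unfolding unital_eq by blast
    show "P \<inter> P' = {}"
    proof (rule ccontr)
      assume "P \<inter> P' \<noteq> {}"
      then obtain x where "x \<in> P" "x \<in> P'" by auto
      then have "proj_point x = P" "proj_point x = P'"
        using mem_proj_point_eq[of x v] mem_proj_point_eq[of x v'] \<open>P = proj_point v\<close> \<open>P' = proj_point v'\<close> by simp_all
      with \<open>P \<noteq> P'\<close> show False by simp
    qed
  qed
  have cardP: "card P = CARD('a) - 1" if "P \<in> ?U" for P
    using that card_proj_point unfolding unital_eq herm_vecs_def by auto
  have sub: "\<Union>(id ` ?U) \<subseteq> herm_vecs q"
  proof
    fix x assume "x \<in> \<Union>(id ` ?U)"
    then obtain v where v: "v \<in> herm_vecs q" "x \<in> proj_point v" unfolding unital_eq by auto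
    then obtain c where "c \<noteq> 0" "x = smult3 c v" unfolding proj_point_def by auto
    then show "x \<in> herm_vecs q" using herm_vecs_smult[OF v(1)] by simp
  qed
  have "card (\<Union>(id ` ?U)) = (\<Sum>P\<in>?U. card (id P))"
    by (rule card_UN_disjoint) (use disj in auto)
  also have "\<dots> = card ?U * (CARD('a) - 1)" using cardP by simp
  finally have "card ?U * (CARD('a) - 1) \<le> card (herm_vecs q :: 'a vec3 set)"
    using card_mono[OF _ sub] by simp
  then show ?thesis using card_herm_vecs[of q, where 'a='a] by linarith
qed

lemma card_unital:
  assumes "CARD('a::{field,finite}) = q ^ 2" "q \<ge> 2"
  shows "card (hermitian_unital q :: 'a vec3 set set) \<le> 2 * q ^ 3"
proof -
  let ?u = "card (hermitian_unital q :: 'a vec3 set set)"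
  have "?u * (CARD('a) - 1) \<le> CARD('a) ^ 2 * (q + 1)" by (rule card_unital_aux)
  then have "?u * (q^2 - 1) \<le> (q^2) ^ 2 * (q + 1)" using assms(1) by simp
  then have "?u * (q^2 - 1) \<le> q^4 * (q + 1)" by (simp add: power_mult[symmetric])
  then have "real (?u * (q^2 - 1)) \<le> real (q^4 * (q + 1))" by (simp only: of_nat_le_iff)
  moreover have "q^2 \<ge> 1" using assms(2) by simp
  ultimately have "real ?u * (real q ^ 2 - 1) \<le> real q ^ 4 * (real q + 1)"
    by (simp add: of_nat_diff algebra_simps)
  moreover have "real q ^ 2 - 1 = (real q - 1) * (real q + 1)" by (simp add: algebra_simps power2_eq_square)
  ultimately have "real ?u * (real q - 1) * (real q + 1) \<le> real q ^ 4 * (real q + 1)" by (simp add: mult.assoc)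
  then have a: "real ?u * (real q - 1) \<le> real q ^ 4" using assms(2) by simp
  have "2 * real ?u \<le> real q * real ?u" using assms(2) by (intro mult_right_mono) auto
  then have "real ?u * real q \<le> 2 * (real ?u * (real q - 1))" by (simp add: algebra_simps)
  also have "\<dots> \<le> 2 * real q ^ 4" using a by simp
  also have "\<dots> = 2 * real q ^ 3 * real q" by (simp add: eval_nat_numeral)
  finally have "real ?u * real q \<le> 2 * real q ^ 3 * real q" .
  then have "real ?u \<le> 2 * real q ^ 3" using assms(2) by simp
  then have "real ?u \<le> real (2 * q ^ 3)" by simp
  then show ?thesis by (simp only: of_nat_le_iff)
qed

lemma card_fibres_sum:
  assumes "finite A" "finite G" "\<forall>c\<in>A. pt c \<in> G"
  shows "card A = (\<Sum>P\<in>G. card {c\<in>A. pt c = P})"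
proof -
  have "A = (\<Union>P\<in>G. {c\<in>A. pt c = P})" using assms(3) by auto
  then have "card A = card (\<Union>P\<in>G. {c\<in>A. pt c = P})" by simp
  also have "\<dots> = (\<Sum>P\<in>G. card {c\<in>A. pt c = P})"
    by (rule card_UN_disjoint) (use assms in auto)
  finally show ?thesis .
qed

lemma count_bad:
  fixes I B :: "'c set" and G :: "'p set" and pt :: "'c \<Rightarrow> 'p" and Bad :: "('c \<Rightarrow> bool) set"
  assumes finI: "finite I" and BI: "B \<subseteq> I" and finG: "finite G" and ptG: "\<forall>c\<in>B. pt c \<in> G"
    and Bad: "Bad \<subseteq> PiE I (\<lambda>_. UNIV)"
    and small: "\<forall>\<sigma>\<in>Bad. (\<Sum>P\<in>G. min (card {c\<in>B. pt c = P \<and> \<sigma> c}) (card {c\<in>B. pt c = P \<and> \<not> \<sigma> c})) \<le> M"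
  shows "card Bad \<le> card {S. S \<subseteq> B \<and> card S \<le> M} * 2 ^ card G * 2 ^ (card I - card B)"
proof -
  have finB: "finite B" using finite_subset[OF BI finI] .
  define maj where "maj \<sigma> P = (card {c\<in>B. pt c = P \<and> \<not> \<sigma> c} \<le> card {c\<in>B. pt c = P \<and> \<sigma> c})"
    for \<sigma> :: "'c \<Rightarrow> bool" and P
  define S where "S \<sigma> = {c\<in>B. \<sigma> c \<noteq> maj \<sigma> (pt c)}" for \<sigma>
  define f where "f \<sigma> = (S \<sigma>, restrict (maj \<sigma>) G, restrict \<sigma> (I - B))" for \<sigma>
  define T where "T = {S. S \<subseteq> B \<and> card S \<le> M} \<times> PiE G (\<lambda>_. UNIV::bool set) \<times> PiE (I - B) (\<lambda>_. UNIV::bool set)"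
  have cardS: "card (S \<sigma>) = (\<Sum>P\<in>G. min (card {c\<in>B. pt c = P \<and> \<sigma> c}) (card {c\<in>B. pt c = P \<and> \<not> \<sigma> c}))" for \<sigma>
  proof -
    have "card (S \<sigma>) = (\<Sum>P\<in>G. card {c\<in>S \<sigma>. pt c = P})"
      by (rule card_fibres_sum) (use finB finG ptG in \<open>auto simp: S_def\<close>)
    also have "\<dots> = (\<Sum>P\<in>G. min (card {c\<in>B. pt c = P \<and> \<sigma> c}) (card {c\<in>B. pt c = P \<and> \<not> \<sigma> c}))"
    proof (rule sum.cong[OF refl])
      fix P assume "P \<in> G"
      show "card {c\<in>S \<sigma>. pt c = P} = min (card {c\<in>B. pt c = P \<and> \<sigma> c}) (card {c\<in>B. pt c = P \<and> \<not> \<sigma> c})"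
      proof (cases "maj \<sigma> P")
        case True
        then have "{c\<in>S \<sigma>. pt c = P} = {c\<in>B. pt c = P \<and> \<not> \<sigma> c}" unfolding S_def by auto
        then show ?thesis using True unfolding maj_def by simp
      next
        case False
        then have "{c\<in>S \<sigma>. pt c = P} = {c\<in>B. pt c = P \<and> \<sigma> c}" unfolding S_def by auto
        then show ?thesis using False unfolding maj_def by simp
      qed
    qed
    finally show ?thesis .
  qed
  have img: "f ` Bad \<subseteq> T"
  proof
    fix x assume "x \<in> f ` Bad"
    then obtain \<sigma> where "\<sigma> \<in> Bad" "x = f \<sigma>" by auto
    then show "x \<in> T" unfolding T_def f_def using cardS small by (auto simp: S_def)
  qed
  have inj: "inj_on f Bad"
  proof (rule inj_onI)
    fix \<sigma> \<tau> assume s: "\<sigma> \<in> Bad" and t: "\<tau> \<in> Bad" and eq: "f \<sigma> = f \<tau>"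
    from eq have eS: "S \<sigma> = S \<tau>" and em: "restrict (maj \<sigma>) G = restrict (maj \<tau>) G"
      and er: "restrict \<sigma> (I - B) = restrict \<tau> (I - B)" unfolding f_def by auto
    show "\<sigma> = \<tau>"
    proof
      fix c
      show "\<sigma> c = \<tau> c"
      proof (cases "c \<in> I")
        case False
        then show ?thesis using s t Bad by (auto simp: PiE_def extensional_def)
      next
        case cI: True
        show ?thesis
        proof (cases "c \<in> B")
          case False
          then show ?thesis using cI er by (metis Diff_iff restrict_apply')
        next
          case True
          then have "pt c \<in> G" using ptG by auto
          then have "maj \<sigma> (pt c) = maj \<tau> (pt c)" using em by (metis restrict_apply')
          moreover have "(c \<in> S \<sigma>) = (c \<in> S \<tau>)" using eS by simp
          ultimately show ?thesis using True unfolding S_def by auto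
        qed
      qed
    qed
  qed
  have "card Bad = card (f ` Bad)" using card_image[OF inj] by simp
  also have "\<dots> \<le> card T"
  proof (rule card_mono[OF _ img])
    have "finite {S. S \<subseteq> B \<and> card S \<le> M}" by (rule finite_subset[of _ "Pow B"]) (use finB in auto)
    then show "finite T" unfolding T_def using finG finI by (intro finite_cartesian_product finite_PiE) auto
  qed
  also have "card T = card {S. S \<subseteq> B \<and> card S \<le> M} * 2 ^ card G * 2 ^ (card I - card B)"
    unfolding T_def using finB finI finG BI by (simp add: card_cartesian_product card_PiE card_Diff_subset)
  finally show ?thesis .
qed

lemma card_small_subsets:
  assumes "finite B"
  shows "card {S. S \<subseteq> B \<and> card S \<le> M} * 16 ^ card B \<le> 16 ^ M * 17 ^ card B"
proof -
  let ?n = "card B"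
  have eq: "{S. S \<subseteq> B \<and> card S \<le> M} = (\<Union>k\<in>{..M}. {S. S \<subseteq> B \<and> card S = k})" by auto
  have "card {S. S \<subseteq> B \<and> card S \<le> M} = (\<Sum>k\<le>M. card {S. S \<subseteq> B \<and> card S = k})"
    unfolding eq by (rule card_UN_disjoint) (use assms in auto)
  also have "\<dots> = (\<Sum>k\<le>M. ?n choose k)" using n_subsets[OF assms] by simp
  finally have c: "card {S. S \<subseteq> B \<and> card S \<le> M} = (\<Sum>k\<le>M. ?n choose k)" .
  have "(\<Sum>k\<le>M. ?n choose k) * 16 ^ ?n \<le> 16 ^ M * (\<Sum>k\<le>?n. (?n choose k) * 16 ^ (?n - k))"
  proof -
    have "(\<Sum>k\<le>M. ?n choose k) * 16 ^ ?n = (\<Sum>k\<le>M. (?n choose k) * 16 ^ ?n)" by (simp add: sum_distrib_right)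
    also have "\<dots> \<le> (\<Sum>k\<le>M. 16 ^ M * ((?n choose k) * 16 ^ (?n - k)))"
    proof (rule sum_mono)
      fix k assume "k \<in> {..M}"
      then have kM: "k \<le> M" by simp
      show "(?n choose k) * 16 ^ ?n \<le> 16 ^ M * ((?n choose k) * 16 ^ (?n - k))"
      proof (cases "k \<le> ?n")
        case True
        have "(16::nat) ^ ?n = 16 ^ k * 16 ^ (?n - k)" using True by (simp add: power_add[symmetric])
        also have "\<dots> \<le> 16 ^ M * 16 ^ (?n - k)" using kM by (intro mult_right_mono power_increasing) auto
        finally show ?thesis by (simp add: algebra_simps)
      next
        case False
        then show ?thesis by simp
      qed
    qed
    also have "\<dots> = 16 ^ M * (\<Sum>k\<le>M. (?n choose k) * 16 ^ (?n - k))" by (simp add: sum_distrib_left)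
    also have "(\<Sum>k\<le>M. (?n choose k) * 16 ^ (?n - k)) = (\<Sum>k\<le>min M ?n. (?n choose k) * 16 ^ (?n - k))"
      by (rule sum.mono_neutral_right) auto
    also have "\<dots> \<le> (\<Sum>k\<le>?n. (?n choose k) * 16 ^ (?n - k))"
      by (rule sum_mono2) auto
    finally show ?thesis by simp
  qed
  also have "(\<Sum>k\<le>?n. (?n choose k) * 16 ^ (?n - k)) = (1 + 16) ^ ?n"
    by (subst binomial_ring) simp
  finally show ?thesis using c by simp
qed

lemma pow16_less: "q \<ge> 128 \<Longrightarrow> (q::nat) ^ 16 < 2 ^ q"
proof (induction q rule: dec_induct)
  case base
  then show ?case by simp
next
  case (step q)
  have "(q + 1) * 128 \<le> 129 * q" using step(1) by simp
  then have "((q + 1) * 128) ^ 16 \<le> (129 * q) ^ 16" by (rule power_mono) simp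
  moreover have "((q + 1) * 128) ^ 16 = (q + 1) ^ 16 * 128 ^ 16" by (rule power_mult_distrib)
  moreover have "(129 * q) ^ 16 = 129 ^ 16 * q ^ 16" by (rule power_mult_distrib)
  ultimately have a: "(q + 1) ^ 16 * 128 ^ 16 \<le> 129 ^ 16 * q ^ 16" by simp
  have "(129::nat) ^ 16 \<le> 2 * 128 ^ 16" by simp
  then have "129 ^ 16 * q ^ 16 \<le> 2 * 128 ^ 16 * q ^ 16" by (rule mult_right_mono) simp
  with a have "(q + 1) ^ 16 * 128 ^ 16 \<le> (2 * q ^ 16) * 128 ^ 16" by (simp add: algebra_simps)
  then have "(q + 1) ^ 16 \<le> 2 * q ^ 16" by simp
  also have "\<dots> < 2 * 2 ^ q" using step(3) by simp
  finally show ?case by simp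
qed

lemma Z_lower:
  fixes X :: "'a::{field,finite} vec3 set set set"
  assumes XS: "X \<subseteq> secants q"
  shows "(\<Sum>P\<in>hermitian_unital q. card {l\<in>X. P \<in> l \<and> \<sigma> (P, l)} * card {l\<in>X. P \<in> l \<and> \<not> \<sigma> (P, l)})
           \<le> Z_edges q X \<sigma>"
proof -
  let ?U = "hermitian_unital q :: 'a vec3 set set"
  define A where "A P = {l\<in>X. P \<in> l \<and> \<sigma> (P, l)}" for P
  define B where "B P = {l\<in>X. P \<in> l \<and> \<not> \<sigma> (P, l)}" for P
  define E where "E P = (\<lambda>(l, l'). {l, l'}) ` (A P \<times> B P)" for P
  define Zs where "Zs = {{l, l'} | l l'. l \<in> X \<and> l' \<in> X \<and> l \<noteq> l' \<and> Hstar_adj q \<sigma> l l'}"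
  have secL: "l \<in> PG_lines" if "l \<in> X" for l using that XS unfolding secants_def by auto
  have cardE: "card (E P) = card (A P) * card (B P)" for P
  proof -
    have "inj_on (\<lambda>(l, l'). {l, l'}) (A P \<times> B P)"
    proof (rule inj_onI, clarify)
      fix l l' m m' assume "l \<in> A P" "l' \<in> B P" "m \<in> A P" "m' \<in> B P" "{l, l'} = {m, m'}"
      moreover have "l \<noteq> m'" "l' \<noteq> m" using \<open>l \<in> A P\<close> \<open>m' \<in> B P\<close> \<open>l' \<in> B P\<close> \<open>m \<in> A P\<close>
        unfolding A_def B_def by auto
      ultimately show "l = m \<and> l' = m'" by (auto simp: doubleton_eq_iff)
    qed
    then show ?thesis unfolding E_def by (simp add: card_image card_cartesian_product)
  qed
  have sub: "E P \<subseteq> Zs" if "P \<in> ?U" for P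
  proof
    fix e assume "e \<in> E P"
    then obtain l l' where ll: "l \<in> A P" "l' \<in> B P" "e = {l, l'}" unfolding E_def by auto
    then have "l \<in> X" "l' \<in> X" "l \<noteq> l'" unfolding A_def B_def by auto
    moreover have "Hstar_adj q \<sigma> l l'"
      unfolding Hstar_adj_def incid_def using ll that XS \<open>l \<in> X\<close> \<open>l' \<in> X\<close>
      unfolding A_def B_def by (intro bexI[of _ P]) auto
    ultimately show "e \<in> Zs" unfolding Zs_def using ll by blast
  qed
  have disj: "E P \<inter> E P' = {}" if "P \<in> ?U" "P' \<in> ?U" "P \<noteq> P'" for P P'
  proof (rule ccontr)
    assume "E P \<inter> E P' \<noteq> {}"
    then obtain l l' m m' where a: "l \<in> A P" "l' \<in> B P" "m \<in> A P'" "m' \<in> B P'" "{l, l'} = {m, m'}"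
      unfolding E_def by auto
    have "l \<noteq> l'" using a unfolding A_def B_def by auto
    have "P \<in> l" "P \<in> l'" "P' \<in> m" "P' \<in> m'" "l \<in> X" "l' \<in> X" using a unfolding A_def B_def by auto
    moreover have "(l = m \<and> l' = m') \<or> (l = m' \<and> l' = m)" using a(5) by (auto simp: doubleton_eq_iff)
    ultimately have "P' \<in> l" "P' \<in> l'" by auto
    then have "P = P'" using lines_meet_once[of l l' P P'] \<open>P \<in> l\<close> \<open>P \<in> l'\<close> \<open>l \<noteq> l'\<close> secL \<open>l \<in> X\<close> \<open>l' \<in> X\<close>
      by blast
    with that show False by simp
  qed
  have "(\<Sum>P\<in>?U. card (A P) * card (B P)) = (\<Sum>P\<in>?U. card (E P))" by (simp add: cardE)
  also have "\<dots> = card (\<Union>P\<in>?U. E P)"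
    by (rule card_UN_disjoint[symmetric]) (use disj in auto)
  also have "\<dots> \<le> card Zs" by (rule card_mono) (use sub in auto)
  also have "\<dots> = Z_edges q X \<sigma>" unfolding Zs_def Z_edges_def by simp
  finally show ?thesis unfolding A_def B_def .
qed

lemma double_count:
  fixes X :: "'a::{field,finite} vec3 set set set"
  assumes XS: "X \<subseteq> secants q"
  shows "(\<Sum>P\<in>hermitian_unital q. card {l\<in>X. P \<in> l}) = card X * (q + 1)"
proof -
  let ?U = "hermitian_unital q :: 'a vec3 set set"
  have ind: "card {x\<in>A. Q x} = (\<Sum>x\<in>A. if Q x then 1 else 0)" if "finite A" for A :: "'b set" and Q
  proof -
    have "(\<Sum>x\<in>A. if Q x then 1 else 0) = (\<Sum>x\<in>{x\<in>A. Q x}. 1::nat)"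
      by (rule sum.inter_filter[symmetric]) (rule that)
    then show ?thesis by simp
  qed
  have "(\<Sum>P\<in>?U. card {l\<in>X. P \<in> l}) = (\<Sum>P\<in>?U. \<Sum>l\<in>X. if P \<in> l then 1 else 0)"
    by (intro sum.cong refl ind) simp
  also have "\<dots> = (\<Sum>l\<in>X. \<Sum>P\<in>?U. if P \<in> l then 1 else 0)" by (rule sum.swap)
  also have "\<dots> = (\<Sum>l\<in>X. card {P\<in>?U. P \<in> l})"
    by (intro sum.cong refl ind[symmetric]) simp
  also have "\<dots> = (\<Sum>l\<in>X. q + 1)"
  proof (rule sum.cong[OF refl])
    fix l assume "l \<in> X"
    then have "card (l \<inter> ?U) = q + 1" using XS unfolding secants_def by auto
    moreover have "{P\<in>?U. P \<in> l} = l \<inter> ?U" by auto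
    ultimately show "card {P\<in>?U. P \<in> l} = q + 1" by simp
  qed
  also have "\<dots> = card X * (q + 1)" by simp
  finally show ?thesis .
qed

theorem mainTheorem8:
  fixes q :: nat and X :: "'a::{field,finite} vec3 set set set"
  assumes q_pp: "\<exists>p k. prime p \<and> k \<ge> 1 \<and> q = p ^ k"
    and q_big: "q \<ge> 2 ^ 40"
    and field_card: "CARD('a) = q ^ 2"
    and X_sub: "X \<subseteq> secants q"
    and X_card: "card X = 2 ^ 24 * q ^ 2"
  shows "measure_pmf.prob (coin_space q) {\<sigma>. Z_edges q X \<sigma> \<le> 2 ^ 40 * q ^ 3}
           < 1 / (real (q ^ 2 * (q ^ 2 - q + 1))) ^ (2 ^ 24 * q ^ 2)"
proof -
  let ?U = "hermitian_unital q :: 'a vec3 set set"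
  define I where "I = (incid q :: ('a vec3 set \<times> 'a vec3 set set) set)"
  define \<Omega> where "\<Omega> = PiE I (\<lambda>_. UNIV :: bool set)"
  define d where "d P = card {l\<in>X. P \<in> l}" for P
  define D :: nat where "D = 2 ^ 22"
  define G where "G = {P\<in>?U. D \<le> d P}"
  define Bc where "Bc = (SIGMA P:G. {l\<in>X. P \<in> l})"
  define K where "K = q ^ 3"
  define M where "M = 2 ^ 19 * K"
  define Bad where "Bad = {\<sigma>\<in>\<Omega>. Z_edges q X \<sigma> \<le> 2 ^ 40 * q ^ 3}"
  have q2: "q \<ge> 2" using q_big by simp
  have K1: "K \<ge> 1" unfolding K_def using q2 by simp
  have finI: "finite I" by simp
  have BcI: "Bc \<subseteq> I" unfolding Bc_def I_def G_def incid_def using X_sub by auto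
  have finG: "finite G" by simp
  have ptG: "\<forall>c\<in>Bc. fst c \<in> G" unfolding Bc_def by auto
  have BadO: "Bad \<subseteq> \<Omega>" unfolding Bad_def by auto
  have small: "\<forall>\<sigma>\<in>Bad. (\<Sum>P\<in>G. min (card {c\<in>Bc. fst c = P \<and> \<sigma> c}) (card {c\<in>Bc. fst c = P \<and> \<not> \<sigma> c})) \<le> M"
  proof
    fix \<sigma> assume s: "\<sigma> \<in> Bad"
    define a where "a P = card {l\<in>X. P \<in> l \<and> \<sigma> (P, l)}" for P
    define b where "b P = card {l\<in>X. P \<in> l \<and> \<not> \<sigma> (P, l)}" for P
    have ca: "card {c\<in>Bc. fst c = P \<and> \<sigma> c} = a P" if "P \<in> G" for P
    proof -
      have "{c\<in>Bc. fst c = P \<and> \<sigma> c} = (\<lambda>l. (P, l)) ` {l\<in>X. P \<in> l \<and> \<sigma> (P, l)}"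
        unfolding Bc_def using that by auto
      then show ?thesis unfolding a_def by (simp add: card_image inj_on_def)
    qed
    have cb: "card {c\<in>Bc. fst c = P \<and> \<not> \<sigma> c} = b P" if "P \<in> G" for P
    proof -
      have "{c\<in>Bc. fst c = P \<and> \<not> \<sigma> c} = (\<lambda>l. (P, l)) ` {l\<in>X. P \<in> l \<and> \<not> \<sigma> (P, l)}"
        unfolding Bc_def using that by auto
      then show ?thesis unfolding b_def by (simp add: card_image inj_on_def)
    qed
    have dab: "d P = a P + b P" for P
    proof -
      have "{l\<in>X. P \<in> l} = {l\<in>X. P \<in> l \<and> \<sigma> (P, l)} \<union> {l\<in>X. P \<in> l \<and> \<not> \<sigma> (P, l)}" by auto
      then show ?thesis unfolding d_def a_def b_def by (simp add: card_Un_disjoint[symmetric] disjoint_iff)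
    qed
    have "D * (\<Sum>P\<in>G. min (a P) (b P)) = (\<Sum>P\<in>G. D * min (a P) (b P))" by (simp add: sum_distrib_left)
    also have "\<dots> \<le> (\<Sum>P\<in>G. 2 * (a P * b P))"
    proof (rule sum_mono)
      fix P assume "P \<in> G"
      then have "D \<le> a P + b P" unfolding G_def using dab by auto
      then have "D * min (a P) (b P) \<le> (a P + b P) * min (a P) (b P)" by (rule mult_right_mono) simp
      also have "\<dots> \<le> 2 * (a P * b P)"
        by (cases "a P \<le> b P") (auto simp: min_def algebra_simps intro: mult_right_mono mult_left_mono)
      finally show "D * min (a P) (b P) \<le> 2 * (a P * b P)" .
    qed
    also have "\<dots> = 2 * (\<Sum>P\<in>G. a P * b P)" by (simp add: sum_distrib_left)
    also have "\<dots> \<le> 2 * (\<Sum>P\<in>?U. a P * b P)"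
      by (intro mult_left_mono sum_mono2) (auto simp: G_def)
    also have "\<dots> \<le> 2 * Z_edges q X \<sigma>"
      using Z_lower[OF X_sub, of \<sigma>] unfolding a_def b_def by simp
    also have "\<dots> \<le> 2 * (2 ^ 40 * q ^ 3)" using s unfolding Bad_def by simp
    finally have "D * (\<Sum>P\<in>G. min (a P) (b P)) \<le> D * M" unfolding D_def M_def K_def by simp
    then have "(\<Sum>P\<in>G. min (a P) (b P)) \<le> M" unfolding D_def by simp
    then show "(\<Sum>P\<in>G. min (card {c\<in>Bc. fst c = P \<and> \<sigma> c}) (card {c\<in>Bc. fst c = P \<and> \<not> \<sigma> c})) \<le> M"
      using ca cb by simp
  qed
  have cBad: "card Bad \<le> card {S. S \<subseteq> Bc \<and> card S \<le> M} * 2 ^ card G * 2 ^ (card I - card Bc)"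
    by (rule count_bad[OF finI BcI finG ptG _ small]) (use BadO in \<open>simp add: \<Omega>_def\<close>)
  have cSS: "card {S. S \<subseteq> Bc \<and> card S \<le> M} * 16 ^ card Bc \<le> 16 ^ M * 17 ^ card Bc"
    by (rule card_small_subsets) simp
  have cU: "card ?U \<le> 2 * K" using card_unital[OF field_card q2] unfolding K_def .
  have cG: "card G \<le> 2 * K" using cU card_mono[of ?U G] unfolding G_def by auto
  have NB: "card Bc \<ge> 8 * (2 ^ 20 * K)"
  proof -
    have "card Bc = (\<Sum>P\<in>G. d P)" unfolding Bc_def d_def by (rule card_SigmaI) auto
    moreover have "(\<Sum>P\<in>?U. d P) = (\<Sum>P\<in>G. d P) + (\<Sum>P\<in>?U - G. d P)"
      using sum.subset_diff[of G ?U d] unfolding G_def by (simp add: add.commute)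
    moreover have "(\<Sum>P\<in>?U - G. d P) \<le> (\<Sum>P\<in>?U - G. D)"
      by (rule sum_mono) (auto simp: G_def)
    moreover have "(\<Sum>P\<in>?U - G. D) \<le> card ?U * D"
      by (simp add: card_Diff_subset_Int)
    moreover have "(\<Sum>P\<in>?U. d P) = card X * (q + 1)" unfolding d_def by (rule double_count[OF X_sub])
    moreover have "card X * (q + 1) \<ge> 2 ^ 24 * K" unfolding X_card K_def by (simp add: power3_eq_cube power2_eq_square algebra_simps)
    moreover have "card ?U * D \<le> 2 * K * 2 ^ 22" using cU unfolding D_def by simp
    ultimately show ?thesis unfolding D_def by simp
  qed
  define R where "R = 2 ^ 20 * K"
  define e where "e = card Bc - 8 * R"
  have NBe: "card Bc = 8 * R + e" unfolding e_def R_def using NB by simp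
  have key: "16 ^ M * 17 ^ card Bc * 2 ^ card G * 2 ^ (2 ^ 22 * K) \<le> (32::nat) ^ card Bc"
  proof -
    have m1: "(16::nat) ^ M = 2 ^ (2 * R)"
    proof -
      have "(16::nat) ^ M = (2 ^ 4) ^ M" by simp
      also have "\<dots> = 2 ^ (4 * M)" by (simp only: power_mult)
      also have "4 * M = 2 * R" unfolding M_def R_def by simp
      finally show ?thesis .
    qed
    have m2: "(2::nat) ^ card G \<le> 2 ^ R" using cG K1 unfolding R_def by (intro power_increasing) simp_all
    have m3: "(2::nat) ^ (2 ^ 22 * K) = 2 ^ (4 * R)" unfolding R_def by simp
    have "(16::nat) ^ M * 17 ^ card Bc * 2 ^ card G * 2 ^ (2 ^ 22 * K) \<le> 2 ^ (2 * R) * 17 ^ card Bc * 2 ^ R * 2 ^ (4 * R)"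
      unfolding m1 m3 using m2 by (intro mult_mono) simp_all
    also have "\<dots> = (2 ^ 7) ^ R * 17 ^ card Bc"
    proof -
      have "(2::nat) ^ (2 * R) * 2 ^ R * 2 ^ (4 * R) = 2 ^ (7 * R)" by (simp add: power_add[symmetric])
      also have "\<dots> = (2 ^ 7) ^ R" by (simp only: power_mult)
      finally show ?thesis by (simp add: algebra_simps)
    qed
    also have "(2 ^ 7) ^ R * (17::nat) ^ card Bc = (2 ^ 7) ^ R * ((17 ^ 8) ^ R * 17 ^ e)"
      unfolding NBe by (simp only: power_add power_mult)
    also have "(2 ^ 7) ^ R * ((17 ^ 8) ^ R * 17 ^ e) = ((2 ^ 7 * 17 ^ 8) ^ R) * (17::nat) ^ e"
      by (simp only: power_mult_distrib mult.assoc)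
    also have "(2 ^ 7 * 17 ^ 8 :: nat) = 892896952448" by simp
    also have "(892896952448::nat) ^ R * 17 ^ e \<le> 1099511627776 ^ R * 32 ^ e"
      by (intro mult_mono power_mono) simp_all
    also have "(1099511627776::nat) = 32 ^ 8" by simp
    also have "(32 ^ 8) ^ R * 32 ^ e = (32::nat) ^ card Bc" unfolding NBe by (simp only: power_add power_mult)
    finally show ?thesis .
  qed
  have bound: "card Bad * 2 ^ (2 ^ 22 * K) \<le> 2 ^ card I"
  proof -
    have "card Bad * 2 ^ (2 ^ 22 * K) * 16 ^ card Bc
        \<le> (card {S. S \<subseteq> Bc \<and> card S \<le> M} * 16 ^ card Bc) * 2 ^ card G * 2 ^ (card I - card Bc) * 2 ^ (2 ^ 22 * K)"
      using cBad by (simp add: algebra_simps)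
    also have "\<dots> \<le> (16 ^ M * 17 ^ card Bc) * 2 ^ card G * 2 ^ (card I - card Bc) * 2 ^ (2 ^ 22 * K)"
      using cSS by (intro mult_right_mono) simp_all
    also have "\<dots> = (16 ^ M * 17 ^ card Bc * 2 ^ card G * 2 ^ (2 ^ 22 * K)) * 2 ^ (card I - card Bc)"
      by (simp add: algebra_simps)
    also have "\<dots> \<le> 32 ^ card Bc * 2 ^ (card I - card Bc)"
      using key by (intro mult_right_mono) simp_all
    also have "(32::nat) ^ card Bc = 16 ^ card Bc * 2 ^ card Bc"
      by (simp add: power_mult_distrib[symmetric])
    also have "16 ^ card Bc * 2 ^ card Bc * 2 ^ (card I - card Bc) = (16::nat) ^ card Bc * 2 ^ card I"
    proof -
      have "card Bc \<le> card I" using card_mono[OF finI BcI] .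
      then have "(2::nat) ^ card Bc * 2 ^ (card I - card Bc) = 2 ^ card I" by (simp add: power_add[symmetric])
      then show ?thesis by (simp add: mult.assoc)
    qed
    finally have "card Bad * 2 ^ (2 ^ 22 * K) * 16 ^ card Bc \<le> 2 ^ card I * 16 ^ card Bc"
      by (simp add: mult.commute)
    then show ?thesis by simp
  qed
  have \<Omega>ne: "\<Omega> \<noteq> {}" unfolding \<Omega>_def by (simp add: PiE_eq_empty_iff)
  have fin\<Omega>: "finite \<Omega>" by simp
  have card\<Omega>: "card \<Omega> = 2 ^ card I" unfolding \<Omega>_def using finI by (simp add: card_PiE)
  have prob_eq: "measure_pmf.prob (coin_space q) {\<sigma>. Z_edges q X \<sigma> \<le> 2 ^ 40 * q ^ 3} = card Bad / 2 ^ card I"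
  proof -
    have "coin_space q = pmf_of_set \<Omega>" unfolding coin_space_def \<Omega>_def I_def ..
    moreover have "\<Omega> \<inter> {\<sigma>. Z_edges q X \<sigma> \<le> 2 ^ 40 * q ^ 3} = Bad" unfolding Bad_def by auto
    ultimately show ?thesis using measure_pmf_of_set[OF \<Omega>ne fin\<Omega>] card\<Omega> by simp
  qed
  define E where "E = 2 ^ 22 * K"
  define n where "n = q ^ 2 * (q ^ 2 - q + 1)"
  define m where "m = (2::nat) ^ 24 * q ^ 2"
  have n_pos: "n > 0" unfolding n_def using q2 by simp
  have nm: "n ^ m < 2 ^ E"
  proof -
    have "q \<le> q ^ 2" by (simp add: power2_eq_square)
    then have "q ^ 2 - q + 1 \<le> q ^ 2" using q2 by linarith
    then have "n \<le> q ^ 2 * q ^ 2" unfolding n_def by (rule mult_left_mono) simp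
    also have "\<dots> = q ^ 4" by (simp add: power_add[symmetric])
    finally have "n ^ m \<le> (q ^ 4) ^ m" by (rule power_mono) simp
    also have "\<dots> = (q ^ 16) ^ (2 ^ 22 * q ^ 2)" unfolding m_def by (simp only: power_mult[symmetric]) simp
    also have "\<dots> < (2 ^ q) ^ (2 ^ 22 * q ^ 2)"
      using pow16_less[of q] q_big q2 by (intro power_strict_mono) simp_all
    also have "\<dots> = 2 ^ E" unfolding E_def K_def by (simp only: power_mult[symmetric]) (simp add: power3_eq_cube power2_eq_square algebra_simps)
    finally show ?thesis .
  qed
  have "real (card Bad) / 2 ^ card I \<le> 1 / (2::real) ^ E"
  proof -
    have "card Bad * 2 ^ E \<le> 2 ^ card I" using bound unfolding E_def .
    then have "real (card Bad * 2 ^ E) \<le> real (2 ^ card I)" by (simp only: of_nat_le_iff)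
    then have "real (card Bad) * 2 ^ E \<le> 2 ^ card I" by simp
    then show ?thesis by (simp add: field_simps)
  qed
  also have "1 / (2::real) ^ E < 1 / real n ^ m"
  proof -
    have "real (n ^ m) < real (2 ^ E)" using nm by (simp only: of_nat_less_iff)
    then have "real n ^ m < 2 ^ E" by simp
    moreover have "real n ^ m > 0" using n_pos by simp
    ultimately show ?thesis by (simp add: frac_less2)
  qed
  finally have "real (card Bad) / 2 ^ card I < 1 / real n ^ m" .
  then show ?thesis unfolding prob_eq n_def m_def .
qed

end
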